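(* Let $(M,\cdot,1)$ be a monoid without a zero element, $\Sigma$ a finite alphabet, $(g_h,h)$ a maximal factorization on $L$, and $\ell\in L$. If $N^{(g_h,h)}(h(\ell),g_h(\ell))$ is an $M$-DFA (i.e. its state set $\{S^{(g_h,h)}_\alpha(h(\ell))\mid\alpha\in\Sigma^*\}$ is finite), then it is a minimal $M$-DFA recognizing $\ell$.
   Context: $L$ is the set of all functions $\Sigma^*\to M$; $\varepsilon$ the empty word; $(m\cdot\ell)(\gamma)=m\cdot\ell(\gamma)$; $\Delta_\alpha(\ell)(\gamma)=\ell(\alpha\gamma)$. A factorization on $L$ is a pair $g:L\to M$, $f:L\to L$ with $g(\ell)\cdot f(\ell)=\ell$ for all $\ell$. A maximal factorization is a factorization $(g_h,h)$ with $h(m\cdot\ell)=h(\ell)$ for all $\ell\in L$, $m\in M$. Define $S^{(g,f)}_\varepsilon=\mathrm{id}_L$, $S^{(g,f)}_{\alpha\sigma}=f\circ\Delta_\sigma\circ S^{(g,f)}_\alpha$. $N^{(g,f)}(\ell,m)$ is the automaton with states $S^{(g,f)}_\alpha(\ell)$ ($\alpha\in\Sigma^*$), initial state $\ell$, initial value $m$, $\delta(S^{(g,f)}_\alpha(\ell),\sigma)=S^{(g,f)}_{\alpha\sigma}(\ell)$, $w(S^{(g,f)}_\alpha(\ell),\sigma)=g(\Delta_\sigma(S^{(g,f)}_\alpha(\ell)))$, $\rho(S^{(g,f)}_\alpha(\ell))=(S^{(g,f)}_\alpha(\ell))(\varepsilon)$. An $M$-DFA is $(Q,\Sigma,u,i_u,\delta,w,\rho)$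 with $Q$ finite nonempty, initial state $u$, initial value $i_u$, $\delta:Q\times\Sigma\to Q$, $w:Q\times\Sigma\to M$, $\rho:Q\to M$; with $q\alpha$ the extended transition and $w^*(q,\varepsilon)=1$, $w^*(q,\alpha\sigma)=w^*(q,\alpha)\cdot w(q\alpha,\sigma)$, it recognizes $\alpha\mapsto i_u\cdot w^*(u,\alpha)\cdot\rho(u\alpha)$. Minimal: no $M$-DFA recognizing the same language has fewer states. *)

theory Defs
  imports Main
begin

definition has_zero :: "'m::monoid_mult itself \<Rightarrow> bool" where
  "has_zero _ \<longleftrightarrow> (\<exists>z::'m. \<forall>m. z * m = z \<and> m * z = z)"

definition lscale :: "'m::monoid_mult \<Rightarrow> ('a list \<Rightarrow> 'm) \<Rightarrow> ('a list \<Rightarrow> 'm)" where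
  "lscale m l = (\<lambda>\<gamma>. m * l \<gamma>)"

definition Delta :: "'a list \<Rightarrow> ('a list \<Rightarrow> 'm) \<Rightarrow> ('a list \<Rightarrow> 'm)" where
  "Delta \<alpha> l = (\<lambda>\<gamma>. l (\<alpha> @ \<gamma>))"

definition factorization ::
  "(('a list \<Rightarrow> 'm::monoid_mult) \<Rightarrow> 'm) \<Rightarrow> (('a list \<Rightarrow> 'm) \<Rightarrow> ('a list \<Rightarrow> 'm)) \<Rightarrow> bool" where
  "factorization g f \<longleftrightarrow> (\<forall>l. lscale (g l) (f l) = l)"

definition maximal_factorization ::
  "(('a list \<Rightarrow> 'm::monoid_mult) \<Rightarrow> 'm) \<Rightarrow> (('a list \<Rightarrow> 'm) \<Rightarrow> ('a list \<Rightarrow> 'm)) \<Rightarrow> bool" where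
  "maximal_factorization g h \<longleftrightarrow> factorization g h \<and> (\<forall>l m. h (lscale m l) = h l)"

definition Sfun :: "(('a list \<Rightarrow> 'm) \<Rightarrow> ('a list \<Rightarrow> 'm)) \<Rightarrow> 'a list \<Rightarrow> ('a list \<Rightarrow> 'm) \<Rightarrow> ('a list \<Rightarrow> 'm)" where
  "Sfun f \<alpha> = foldl (\<lambda>S \<sigma>. f \<circ> Delta [\<sigma>] \<circ> S) id \<alpha>"

definition is_MDFA :: "'q set \<Rightarrow> 'q \<Rightarrow> 'm \<Rightarrow> ('q \<Rightarrow> 'a \<Rightarrow> 'q) \<Rightarrow> ('q \<Rightarrow> 'a \<Rightarrow> 'm) \<Rightarrow> ('q \<Rightarrow> 'm) \<Rightarrow> bool" where
  "is_MDFA Q u iu \<delta> w \<rho> \<longleftrightarrow> finite Q \<and> Q \<noteq> {} \<and> u \<in> Q \<and> (\<forall>q\<in>Q. \<forall>\<sigma>. \<delta> q \<sigma> \<in> Q)"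

definition ext_trans :: "('q \<Rightarrow> 'a \<Rightarrow> 'q) \<Rightarrow> 'q \<Rightarrow> 'a list \<Rightarrow> 'q" where
  "ext_trans \<delta> q \<alpha> = foldl \<delta> q \<alpha>"

text \<open>w_star_rev on the reversed word: w*(q,eps)=1, w*(q,alpha sigma)=w*(q,alpha) * w(q alpha, sigma).\<close>
primrec w_star_rev :: "('q \<Rightarrow> 'a \<Rightarrow> 'q) \<Rightarrow> ('q \<Rightarrow> 'a \<Rightarrow> 'm::monoid_mult) \<Rightarrow> 'q \<Rightarrow> 'a list \<Rightarrow> 'm" where
  "w_star_rev \<delta> w q [] = 1"
| "w_star_rev \<delta> w q (\<sigma> # \<beta>) = w_star_rev \<delta> w q \<beta> * w (ext_trans \<delta> q (rev \<beta>)) \<sigma>"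

definition w_star :: "('q \<Rightarrow> 'a \<Rightarrow> 'q) \<Rightarrow> ('q \<Rightarrow> 'a \<Rightarrow> 'm::monoid_mult) \<Rightarrow> 'q \<Rightarrow> 'a list \<Rightarrow> 'm" where
  "w_star \<delta> w q \<alpha> = w_star_rev \<delta> w q (rev \<alpha>)"

definition MDFA_lang :: "'q \<Rightarrow> 'm::monoid_mult \<Rightarrow> ('q \<Rightarrow> 'a \<Rightarrow> 'q) \<Rightarrow> ('q \<Rightarrow> 'a \<Rightarrow> 'm) \<Rightarrow> ('q \<Rightarrow> 'm) \<Rightarrow> 'a list \<Rightarrow> 'm" where
  "MDFA_lang u iu \<delta> w \<rho> = (\<lambda>\<alpha>. iu * w_star \<delta> w u \<alpha> * \<rho> (ext_trans \<delta> u \<alpha>))"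

text \<open>The automaton N^{(g,f)}(l,m).  Transitions are given as functions of the state:
  delta(S_alpha(l),sigma) = S_{alpha sigma}(l) = f(Delta_sigma(S_alpha(l))).\<close>
definition N_states :: "(('a list \<Rightarrow> 'm) \<Rightarrow> ('a list \<Rightarrow> 'm)) \<Rightarrow> ('a list \<Rightarrow> 'm) \<Rightarrow> ('a list \<Rightarrow> 'm) set" where
  "N_states f l = {Sfun f \<alpha> l | \<alpha>. True}"

definition N_delta :: "(('a list \<Rightarrow> 'm) \<Rightarrow> ('a list \<Rightarrow> 'm)) \<Rightarrow> ('a list \<Rightarrow> 'm) \<Rightarrow> 'a \<Rightarrow> ('a list \<Rightarrow> 'm)" where
  "N_delta f q \<sigma> = f (Delta [\<sigma>] q)"

definition N_w :: "(('a list \<Rightarrow> 'm) \<Rightarrow> 'm) \<Rightarrow> ('a list \<Rightarrow> 'm) \<Rightarrow> 'a \<Rightarrow> 'm" where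
  "N_w g q \<sigma> = g (Delta [\<sigma>] q)"

definition N_rho :: "('a list \<Rightarrow> 'm) \<Rightarrow> 'm" where
  "N_rho q = q []"

end

theory Submission
  imports Defs
begin

lemma Sfun_snoc: "Sfun f (xs @ [x]) = f \<circ> Delta [x] \<circ> Sfun f xs"
  by (simp add: Sfun_def)

lemma Sfun_nil: "Sfun f [] = id"
  by (simp add: Sfun_def)

lemma Delta_app: "Delta [x] (Delta xs l) = Delta (xs @ [x]) l"
  by (simp add: Delta_def)

lemma Delta_lscale: "Delta a (lscale m l) = lscale m (Delta a l)"
  by (simp add: Delta_def lscale_def)

lemma lscale_lscale: "lscale a (lscale b l) = lscale (a * b) l"
  by (simp add: lscale_def mult.assoc)

lemma ext_snoc: "ext_trans \<delta> q (xs @ [x]) = \<delta> (ext_trans \<delta> q xs) x"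
  by (simp add: ext_trans_def)

lemma ext_app: "ext_trans \<delta> q (xs @ ys) = ext_trans \<delta> (ext_trans \<delta> q xs) ys"
  by (simp add: ext_trans_def)

lemma wstar_nil: "w_star \<delta> w q [] = 1"
  by (simp add: w_star_def)

lemma wstar_snoc: "w_star \<delta> w q (xs @ [x]) = w_star \<delta> w q xs * w (ext_trans \<delta> q xs) x"
  by (simp add: w_star_def)

lemma wstar_app: "w_star \<delta> w q (xs @ ys) = w_star \<delta> w q xs * w_star \<delta> w (ext_trans \<delta> q xs) ys"
proof (induction ys rule: rev_induct)
  case Nil
  then show ?case by (simp add: wstar_nil)
next
  case (snoc x ys)
  have "w_star \<delta> w q (xs @ ys @ [x]) = w_star \<delta> w q ((xs @ ys) @ [x])" by simp
  also have "\<dots> = w_star \<delta> w q (xs @ ys) * w (ext_trans \<delta> q (xs @ ys)) x"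
    by (rule wstar_snoc)
  also have "\<dots> = w_star \<delta> w q xs * (w_star \<delta> w (ext_trans \<delta> q xs) ys
      * w (ext_trans \<delta> (ext_trans \<delta> q xs) ys) x)"
    using snoc by (simp add: ext_app mult.assoc)
  finally show ?case by (simp add: wstar_snoc)
qed

lemma ext_in: "is_MDFA Q u iu \<delta> w \<rho> \<Longrightarrow> ext_trans \<delta> u xs \<in> Q"
  by (induction xs rule: rev_induct) (auto simp: is_MDFA_def ext_snoc ext_trans_def)

lemma ext_N: "ext_trans (N_delta h) q xs = Sfun h xs q"
  by (induction xs rule: rev_induct) (auto simp: ext_snoc Sfun_snoc Sfun_nil N_delta_def ext_trans_def)

theorem mainTheorem12:
  fixes g :: "('a::finite list \<Rightarrow> 'm::monoid_mult) \<Rightarrow> 'm"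
    and h :: "('a list \<Rightarrow> 'm) \<Rightarrow> ('a list \<Rightarrow> 'm)"
    and l :: "'a list \<Rightarrow> 'm"
  assumes "\<not> has_zero TYPE('m)"
    and "maximal_factorization g h"
    and "finite (N_states h (h l))"
  shows "is_MDFA (N_states h (h l)) (h l) (g l) (N_delta h) (N_w g) N_rho
       \<and> MDFA_lang (h l) (g l) (N_delta h) (N_w g) N_rho = l
       \<and> (\<forall>(Q :: 'q set) u iu \<delta> w \<rho>. is_MDFA Q u iu \<delta> w \<rho> \<and> MDFA_lang u iu \<delta> w \<rho> = l
            \<longrightarrow> card (N_states h (h l)) \<le> card Q)"
proof -
  have fac: "\<And>x. lscale (g x) (h x) = x" and hm: "\<And>x m. h (lscale m x) = h x"
    using assms(2) by (auto simp: maximal_factorization_def factorization_def)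
  have hD: "\<And>x a. h (Delta a (h x)) = h (Delta a x)"
  proof -
    fix x :: "'a list \<Rightarrow> 'm" and a
    have "h (Delta a x) = h (Delta a (lscale (g x) (h x)))" by (simp add: fac)
    also have "\<dots> = h (Delta a (h x))" by (simp add: Delta_lscale hm)
    finally show "h (Delta a (h x)) = h (Delta a x)" by simp
  qed
  have S_eq: "\<And>xs. Sfun h xs (h l) = h (Delta xs l)"
  proof -
    fix xs show "Sfun h xs (h l) = h (Delta xs l)"
    proof (induction xs rule: rev_induct)
      case Nil then show ?case by (simp add: Sfun_nil Delta_def)
    next
      case (snoc x xs)
      then show ?case by (simp add: Sfun_snoc hD Delta_app)
    qed
  qed
  have P1: "is_MDFA (N_states h (h l)) (h l) (g l) (N_delta h) (N_w g) N_rho"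
    unfolding is_MDFA_def
  proof (intro conjI ballI allI)
    show "finite (N_states h (h l))" by (rule assms(3))
    show hin: "h l \<in> N_states h (h l)" unfolding N_states_def
      by (rule CollectI, rule exI[of _ "[]"]) (simp add: Sfun_nil)
    then show "N_states h (h l) \<noteq> {}" by auto
    fix q \<sigma> assume "q \<in> N_states h (h l)"
    then obtain a where "q = Sfun h a (h l)" by (auto simp: N_states_def)
    then have "N_delta h q \<sigma> = Sfun h (a @ [\<sigma>]) (h l)"
      by (simp add: N_delta_def Sfun_snoc)
    then show "N_delta h q \<sigma> \<in> N_states h (h l)" by (auto simp: N_states_def)
  qed
  have inv: "\<And>xs. Delta xs l = lscale (g l * w_star (N_delta h) (N_w g) (h l) xs) (Sfun h xs (h l))"
  proof -
    fix xs show "Delta xs l = lscale (g l * w_star (N_delta h) (N_w g) (h l) xs) (Sfun h xs (h l))"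
    proof (induction xs rule: rev_induct)
      case Nil then show ?case by (simp add: Sfun_nil wstar_nil fac Delta_def)
    next
      case (snoc x xs)
      let ?q = "Sfun h xs (h l)"
      have "Delta (xs @ [x]) l = Delta [x] (Delta xs l)" by (simp add: Delta_app)
      also have "\<dots> = lscale (g l * w_star (N_delta h) (N_w g) (h l) xs) (Delta [x] ?q)"
        using snoc by (simp add: Delta_lscale)
      also have "Delta [x] ?q = lscale (g (Delta [x] ?q)) (h (Delta [x] ?q))" by (simp add: fac)
      finally show ?case
        by (simp add: lscale_lscale wstar_snoc ext_N N_w_def Sfun_snoc mult.assoc)
    qed
  qed
  have P2: "MDFA_lang (h l) (g l) (N_delta h) (N_w g) N_rho = l"
  proof
    fix xs
    have "l xs = Delta xs l []" by (simp add: Delta_def)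
    also have "\<dots> = g l * w_star (N_delta h) (N_w g) (h l) xs * Sfun h xs (h l) []"
      by (subst inv) (simp add: lscale_def)
    finally show "MDFA_lang (h l) (g l) (N_delta h) (N_w g) N_rho xs = l xs"
      by (simp add: MDFA_lang_def ext_N N_rho_def)
  qed
  have P3: "card (N_states h (h l)) \<le> card Q"
    if A: "is_MDFA Q u iu \<delta> w \<rho>" and B: "MDFA_lang u iu \<delta> w \<rho> = l"
    for Q :: "'q set" and u iu \<delta> w \<rho>
  proof -
    define F where "F q = h (\<lambda>ys. w_star \<delta> w q ys * \<rho> (ext_trans \<delta> q ys))" for q
    have sub: "N_states h (h l) \<subseteq> F ` Q"
    proof
      fix s assume "s \<in> N_states h (h l)"
      then obtain a where s: "s = Sfun h a (h l)" by (auto simp: N_states_def)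
      have "Delta a l = lscale (iu * w_star \<delta> w u a)
          (\<lambda>ys. w_star \<delta> w (ext_trans \<delta> u a) ys * \<rho> (ext_trans \<delta> (ext_trans \<delta> u a) ys))"
        using B[symmetric]
        by (auto simp: Delta_def lscale_def MDFA_lang_def wstar_app ext_app mult.assoc)
      then have "s = F (ext_trans \<delta> u a)" by (simp add: s S_eq hm F_def)
      then show "s \<in> F ` Q" using ext_in[OF A] by auto
    qed
    have fQ: "finite Q" using A by (simp add: is_MDFA_def)
    have "card (N_states h (h l)) \<le> card (F ` Q)"
      using sub fQ by (intro card_mono) auto
    also have "\<dots> \<le> card Q" using fQ by (rule card_image_le)
    finally show ?thesis .
  qed
  show ?thesis using P1 P2 P3 by blast
qed

end
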